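(* Let $N\ge2$ and $\beta>0$. Then \[ \min\left\{r_\Omega^{-\beta}\,\frac1{|\Omega|}\int_\Omega d_\Omega^\beta\,dx:\ \Omega\subset\mathbb{R}^N\text{ bounded convex open set}\right\}=\binom{N+\beta}{N}^{-1}, \] and the minimum is attained by the unit ball $\Omega=B_1$.
   Context: $d_\Omega$ is the distance function from $\partial\Omega$, $r_\Omega$ the inradius (radius of the largest ball contained in $\Omega$), $|\Omega|$ the Lebesgue measure, and $\binom{N+\beta}{N}:=\frac{\Gamma(N+\beta+1)}{\Gamma(\beta+1)\Gamma(N+1)}$. *)

theory Defs
  imports "HOL-Analysis.Analysis"
begin

definition dist_bd :: "'a::euclidean_space set \<Rightarrow> 'a \<Rightarrow> real" where
  "dist_bd \<Omega> x = infdist x (frontier \<Omega>)"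

definition inradius :: "'a::euclidean_space set \<Rightarrow> real" where
  "inradius \<Omega> = Sup {r. \<exists>x. ball x r \<subseteq> \<Omega>}"

definition gen_binom :: "real \<Rightarrow> real \<Rightarrow> real" where
  "gen_binom a b = Gamma (a + b + 1) / (Gamma (b + 1) * Gamma (a + 1))"

definition torsion_ratio :: "real \<Rightarrow> 'a::euclidean_space set \<Rightarrow> real" where
  "torsion_ratio \<beta> \<Omega> =
     inradius \<Omega> powr (-\<beta>) * (1 / measure lebesgue \<Omega>) *
     integral \<Omega> (\<lambda>x. dist_bd \<Omega> x powr \<beta>)"

end

theory Submission
  imports Defs
begin


lemma powr_integral_1d:
  fixes a \<beta> :: real
  assumes "a \<ge> 0" "\<beta> > 0"
  shows "(\<integral>\<^sup>+t. indicator {0..a} t * ennreal (\<beta> * t powr (\<beta>-1)) \<partial>lborel) = ennreal (a powr \<beta>)"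
proof -
  have "((\<lambda>t. t powr (\<beta>-1)) has_integral (a powr (\<beta>-1+1) / (\<beta>-1+1))) {0..a}"
    by (rule has_integral_powr_from_0) (use assms in auto)
  then have "((\<lambda>t. \<beta> * t powr (\<beta>-1)) has_integral (\<beta> * (a powr \<beta> / \<beta>))) {0..a}"
    by (intro has_integral_mult_right) simp
  then have "((\<lambda>t. \<beta> * t powr (\<beta>-1)) has_integral (a powr \<beta>)) {0..a}"
    using assms by simp
  from nn_integral_has_integral_lebesgue[OF _ this]
  have "(\<integral>\<^sup>+t. ennreal (indicator {0..a} t * (\<beta> * t powr (\<beta>-1))) \<partial>lborel) = ennreal (a powr \<beta>)"
    using assms by simp
  then show ?thesis
    by (simp add: indicator_mult_ennreal mult.commute)
qed

lemma layer_cake: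
  fixes f :: "'a::euclidean_space \<Rightarrow> real"
  assumes [measurable]: "f \<in> borel_measurable borel" "\<Omega> \<in> sets borel"
    and b: "\<beta> > 0" and nonneg: "\<And>x. 0 \<le> f x"
  shows "(\<integral>\<^sup>+x. indicator \<Omega> x * ennreal (f x powr \<beta>) \<partial>lborel) =
    (\<integral>\<^sup>+t. indicator {0..} t * ennreal (\<beta> * t powr (\<beta>-1)) * emeasure lborel {x\<in>\<Omega>. t \<le> f x} \<partial>lborel)"
proof -
  have "(\<integral>\<^sup>+x. indicator \<Omega> x * ennreal (f x powr \<beta>) \<partial>lborel) =
     (\<integral>\<^sup>+x. (\<integral>\<^sup>+t. indicator \<Omega> x * (indicator {0..f x} t * ennreal (\<beta> * t powr (\<beta>-1))) \<partial>lborel) \<partial>lborel)"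
    by (intro nn_integral_cong, subst nn_integral_cmult) (auto simp: powr_integral_1d nonneg b)
  also have "\<dots> = (\<integral>\<^sup>+t. (\<integral>\<^sup>+x. indicator \<Omega> x * (indicator {0..f x} t * ennreal (\<beta> * t powr (\<beta>-1))) \<partial>lborel) \<partial>lborel)"
  proof (rule pair_sigma_finite.Fubini'[symmetric])
    show "pair_sigma_finite lborel lborel" ..
    show "case_prod (\<lambda>x t. indicator \<Omega> x * (indicator {0..f x} t * ennreal (\<beta> * t powr (\<beta>-1))))
       \<in> borel_measurable (lborel \<Otimes>\<^sub>M lborel)"
    proof -
      have "(\<lambda>p::'a\<times>real. if fst p \<in> \<Omega> \<and> 0 \<le> snd p \<and> snd p \<le> f (fst p) then ennreal (\<beta> * snd p powr (\<beta>-1)) else 0)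
         \<in> borel_measurable (lborel \<Otimes>\<^sub>M lborel)"
        by measurable
      then show ?thesis
        by (rule measurable_cong[THEN iffD1, rotated]) (auto simp: indicator_def)
    qed
  qed
  also have "\<dots> = (\<integral>\<^sup>+t. indicator {0..} t * ennreal (\<beta> * t powr (\<beta>-1)) * emeasure lborel {x\<in>\<Omega>. t \<le> f x} \<partial>lborel)"
  proof (intro nn_integral_cong)
    fix t :: real
    have "(\<integral>\<^sup>+x. indicator \<Omega> x * (indicator {0..f x} t * ennreal (\<beta> * t powr (\<beta>-1))) \<partial>lborel)
       = (\<integral>\<^sup>+x. (indicator {0..} t * ennreal (\<beta> * t powr (\<beta>-1))) * indicator {x\<in>\<Omega>. t \<le> f x} x \<partial>lborel)"
      by (intro nn_integral_cong) (auto simp: indicator_def)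
    also have "\<dots> = indicator {0..} t * ennreal (\<beta> * t powr (\<beta>-1)) * emeasure lborel {x\<in>\<Omega>. t \<le> f x}"
      by (subst nn_integral_cmult_indicator) auto
    finally show "(\<integral>\<^sup>+x. indicator \<Omega> x * (indicator {0..f x} t * ennreal (\<beta> * t powr (\<beta>-1))) \<partial>lborel)
       = indicator {0..} t * ennreal (\<beta> * t powr (\<beta>-1)) * emeasure lborel {x\<in>\<Omega>. t \<le> f x}" .
  qed
  finally show ?thesis .
qed



lemma beta_nn:
  fixes \<beta> :: real and N :: nat
  assumes "\<beta> > 0"
  shows "(\<integral>\<^sup>+s. indicator {0..1} s * ennreal (s powr (\<beta>-1) * (1 - s) ^ N) \<partial>lborel) = ennreal (Beta \<beta> (real N + 1))"
proof -
  have "((\<lambda>s. s powr (\<beta>-1) * (1 - s) powr (real N + 1 - 1)) has_integral Beta \<beta> (real N + 1)) {0..1}"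
    by (rule has_integral_Beta_real) (use assms in auto)
  moreover have "negligible {0::real, 1}" by simp
  ultimately have "((\<lambda>s. s powr (\<beta>-1) * (1 - s) ^ N) has_integral Beta \<beta> (real N + 1)) {0..1}"
    by (rule_tac has_integral_spike[where S="{0,1}"]) (auto simp: powr_realpow)
  from nn_integral_has_integral_lebesgue[OF _ this]
  show ?thesis
    by (simp add: indicator_mult_ennreal mult.commute)
qed

lemma beta_scaled:
  fixes \<beta> r :: real and N :: nat
  assumes b: "\<beta> > 0" and r: "r > 0"
  shows "(\<integral>\<^sup>+t. indicator {0..r} t * ennreal (\<beta> * t powr (\<beta>-1) * (1 - t/r) ^ N) \<partial>lborel)
      = ennreal (r powr \<beta> * (\<beta> * Beta \<beta> (real N + 1)))"
proof -
  have "(\<integral>\<^sup>+t. indicator {0..r} t * ennreal (\<beta> * t powr (\<beta>-1) * (1 - t/r) ^ N) \<partial>lborel)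
     = \<bar>r\<bar> * (\<integral>\<^sup>+s. indicator {0..r} (0 + r * s) * ennreal (\<beta> * (0 + r * s) powr (\<beta>-1) * (1 - (0 + r * s)/r) ^ N) \<partial>lborel)"
    by (rule nn_integral_real_affine) (use r in auto)
  also have "(\<integral>\<^sup>+s. indicator {0..r} (0 + r * s) * ennreal (\<beta> * (0 + r * s) powr (\<beta>-1) * (1 - (0 + r * s)/r) ^ N) \<partial>lborel)
     = (\<integral>\<^sup>+s. ennreal (\<beta> * r powr (\<beta>-1)) * (indicator {0..1} s * ennreal (s powr (\<beta>-1) * (1 - s) ^ N)) \<partial>lborel)"
  proof (intro nn_integral_cong)
    fix s :: real
    show "indicator {0..r} (0 + r * s) * ennreal (\<beta> * (0 + r * s) powr (\<beta>-1) * (1 - (0 + r * s)/r) ^ N)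
       = ennreal (\<beta> * r powr (\<beta>-1)) * (indicator {0..1} s * ennreal (s powr (\<beta>-1) * (1 - s) ^ N))"
    proof (cases "s \<in> {0..1}")
      case True
      then have "r * s \<in> {0..r}" using r by (auto simp: mult_le_cancel_left1)
      moreover have "(r * s) powr (\<beta>-1) = r powr (\<beta>-1) * s powr (\<beta>-1)"
        using True r by (simp add: powr_mult)
      ultimately show ?thesis using True r b
        by (simp add: ennreal_mult[symmetric] mult_ac)
    next
      case False
      then have "r * s \<notin> {0..r}" using r
        by (auto simp: zero_le_mult_iff mult_le_cancel_left1)
      then show ?thesis using False by simp
    qed
  qed
  also have "\<dots> = ennreal (\<beta> * r powr (\<beta>-1)) * ennreal (Beta \<beta> (real N + 1))"
    by (subst nn_integral_cmult) (auto simp: beta_nn b)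
  also have "\<bar>r\<bar> * \<dots> = ennreal (r powr \<beta> * (\<beta> * Beta \<beta> (real N + 1)))"
  proof -
    have "r * (\<beta> * r powr (\<beta>-1)) = r powr \<beta> * \<beta>"
      using r by (simp add: powr_diff field_simps)
    moreover have "Beta \<beta> (real N + 1) \<ge> 0"
      using b by (simp add: Beta_def)
    ultimately show ?thesis using r b
      by (simp add: ennreal_mult[symmetric] mult_ac)
  qed
  finally show ?thesis .
qed



lemma ball_le_infdist:
  fixes \<Omega> :: "'a::euclidean_space set"
  assumes "open \<Omega>" "ball z \<rho> \<subseteq> \<Omega>" "frontier \<Omega> \<noteq> {}"
  shows "\<rho> \<le> infdist z (frontier \<Omega>)"
proof -
  have "\<rho> \<le> dist z a" if "a \<in> frontier \<Omega>" for a
  proof -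
    have "a \<notin> \<Omega>" using that assms(1) frontier_disjoint_eq by blast
    then have "a \<notin> ball z \<rho>" using assms(2) by blast
    then show ?thesis by (simp add: dist_commute)
  qed
  then show ?thesis
    unfolding infdist_notempty[OF assms(3)] by (intro cINF_greatest assms(3)) auto
qed

lemma frontier_ne:
  fixes \<Omega> :: "'a::euclidean_space set"
  assumes "bounded \<Omega>" "\<Omega> \<noteq> {}"
  shows "frontier \<Omega> \<noteq> {}"
proof -
  have "\<Omega> \<noteq> UNIV" using assms(1) not_bounded_UNIV by blast
  then show ?thesis using assms frontier_eq_empty by blast
qed

lemma infdist_bounded:
  fixes \<Omega> :: "'a::euclidean_space set"
  assumes "bounded \<Omega>" "\<Omega> \<noteq> {}"
  obtains C where "C \<ge> 0" "\<And>x. x \<in> \<Omega> \<Longrightarrow> infdist x (frontier \<Omega>) \<le> C"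
proof -
  obtain a where a: "a \<in> frontier \<Omega>" using frontier_ne[OF assms] by blast
  obtain B where B: "\<And>x. x \<in> \<Omega> \<Longrightarrow> norm x \<le> B" using assms(1) bounded_iff by blast
  have "infdist x (frontier \<Omega>) \<le> B + norm a" if "x \<in> \<Omega>" for x
  proof -
    have "infdist x (frontier \<Omega>) \<le> dist x a" by (rule infdist_le[OF a])
    also have "\<dots> \<le> norm x + norm a" by (simp add: dist_norm norm_triangle_ineq4)
    finally show ?thesis using B[OF that] by simp
  qed
  moreover have "B + norm a \<ge> 0"
    using B assms(2) by (smt (verit) all_not_in_conv norm_ge_zero)
  ultimately show ?thesis using that by blast
qed

lemma homothety_ball:
  fixes \<Omega> :: "'a::euclidean_space set"
  assumes "convex \<Omega>" "ball x0 r \<subseteq> \<Omega>" "0 \<le> l" "l \<le> 1" "y \<in> \<Omega>"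
  shows "ball ((1 - l) *\<^sub>R y + l *\<^sub>R x0) (l * r) \<subseteq> \<Omega>"
proof
  fix w assume w: "w \<in> ball ((1 - l) *\<^sub>R y + l *\<^sub>R x0) (l * r)"
  then have l: "l > 0" using assms(3) by (cases "l = 0") auto
  define v where "v = x0 + (1 / l) *\<^sub>R (w - ((1 - l) *\<^sub>R y + l *\<^sub>R x0))"
  have "norm (w - ((1 - l) *\<^sub>R y + l *\<^sub>R x0)) < l * r"
    using w by (simp add: dist_norm norm_minus_commute)
  moreover have "dist x0 v = (1 / l) * norm (w - ((1 - l) *\<^sub>R y + l *\<^sub>R x0))"
    using l by (simp add: v_def dist_norm)
  ultimately have "l * dist x0 v < l * r"
    using l by (simp add: field_simps)
  then have "dist x0 v < r"
    using l by (simp add: mult_less_cancel_left_pos)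
  then have "v \<in> \<Omega>" using assms(2) by auto
  moreover have "w = (1 - l) *\<^sub>R y + l *\<^sub>R v"
    using l by (simp add: v_def algebra_simps)
  ultimately show "w \<in> \<Omega>"
    using assms convexD[OF assms(1), of y v "1 - l" l] by simp
qed



lemma dist_bd_measurable[measurable]: "dist_bd \<Omega> \<in> borel_measurable borel"
  unfolding dist_bd_def
  by (intro borel_measurable_continuous_onI continuous_on_infdist continuous_on_id)

lemma dist_bd_nonneg: "0 \<le> dist_bd \<Omega> x"
  by (simp add: dist_bd_def infdist_nonneg)

lemma level_measure:
  fixes \<Omega> :: "'a::euclidean_space set"
  assumes cv: "convex \<Omega>" and op: "open \<Omega>" and bd: "bounded \<Omega>"
    and B: "ball x0 \<rho> \<subseteq> \<Omega>" and \<rho>: "\<rho> > 0" and t: "0 \<le> t" "t \<le> \<rho>"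
  shows "ennreal ((1 - t/\<rho>) ^ DIM('a)) * emeasure lborel \<Omega> \<le> emeasure lborel {x\<in>\<Omega>. t \<le> dist_bd \<Omega> x}"
proof -
  define l where "l = t / \<rho>"
  have l: "0 \<le> l" "l \<le> 1" using t \<rho> by (auto simp: l_def)
  have ne: "\<Omega> \<noteq> {}" using B \<rho> by auto
  have x0: "x0 \<in> \<Omega>" using B \<rho> by auto
  have sub: "(\<lambda>x. (1 - l) *\<^sub>R x + l *\<^sub>R x0) ` \<Omega> \<subseteq> {x\<in>\<Omega>. t \<le> dist_bd \<Omega> x}"
  proof safe
    fix y assume y: "y \<in> \<Omega>"
    show "(1 - l) *\<^sub>R y + l *\<^sub>R x0 \<in> \<Omega>"
      using convexD[OF cv y x0, of "1 - l" l] l by simp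
    have "ball ((1 - l) *\<^sub>R y + l *\<^sub>R x0) (l * \<rho>) \<subseteq> \<Omega>"
      by (rule homothety_ball[OF cv B l y])
    from ball_le_infdist[OF op this frontier_ne[OF bd ne]]
    show "t \<le> dist_bd \<Omega> ((1 - l) *\<^sub>R y + l *\<^sub>R x0)"
      using \<rho> by (simp add: dist_bd_def l_def)
  qed
  have meas: "{x\<in>\<Omega>. t \<le> dist_bd \<Omega> x} \<in> sets lborel"
    using op by measurable
  have "emeasure lebesgue ((\<lambda>x. (1 - l) *\<^sub>R x + l *\<^sub>R x0) ` \<Omega>) = \<bar>1 - l\<bar> ^ DIM('a) * emeasure lebesgue \<Omega>"
    by (rule emeasure_lebesgue_affine)
  also have "\<dots> = ennreal ((1 - t/\<rho>) ^ DIM('a)) * emeasure lborel \<Omega>"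
    using l op by (simp add: l_def ennreal_power)
  finally have "ennreal ((1 - t/\<rho>) ^ DIM('a)) * emeasure lborel \<Omega> \<le> emeasure lebesgue {x\<in>\<Omega>. t \<le> dist_bd \<Omega> x}"
    using sub meas by (metis emeasure_mono sets_completionI_sets)
  then show ?thesis using meas by simp
qed

lemma nn_to_integral:
  fixes f :: "'a::euclidean_space \<Rightarrow> real"
  assumes [measurable]: "f \<in> borel_measurable borel" "\<Omega> \<in> sets borel"
    and nonneg: "\<And>x. 0 \<le> f x"
    and fin: "(\<integral>\<^sup>+x. indicator \<Omega> x * ennreal (f x) \<partial>lborel) < \<infinity>"
  shows "(\<integral>\<^sup>+x. indicator \<Omega> x * ennreal (f x) \<partial>lborel) = ennreal (integral \<Omega> f)"
proof -
  have eq: "(\<integral>\<^sup>+x. indicator \<Omega> x * ennreal (f x) \<partial>lborel) = (\<integral>\<^sup>+x. ennreal (indicator \<Omega> x * f x) \<partial>lborel)"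
    by (intro nn_integral_cong) (auto simp: indicator_def)
  have h1: "(\<integral>\<^sup>+x. ennreal (indicator \<Omega> x * f x) \<partial>lborel) = ennreal (integral UNIV (\<lambda>x. indicator \<Omega> x * f x))"
    by (rule nn_integral_lborel_eq_integral) (use fin eq nonneg in auto)
  have h2: "(\<lambda>x. indicator \<Omega> x * f x) = (\<lambda>x. if x \<in> \<Omega> then f x else 0)"
    by (auto simp: indicator_def)
  have h3: "integral UNIV (\<lambda>x. if x \<in> \<Omega> then f x else 0) = integral \<Omega> f"
    by (rule Henstock_Kurzweil_Integration.integral_restrict_UNIV)
  have "(\<integral>\<^sup>+x. ennreal (indicator \<Omega> x * f x) \<partial>lborel) = ennreal (integral \<Omega> f)"
    using h1 unfolding h2 h3 .
  then show ?thesis using eq by simp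
qed



lemma gen_binom_inv:
  assumes b: "\<beta> > 0"
  shows "inverse (gen_binom (real N) \<beta>) = \<beta> * Beta \<beta> (real N + 1)"
proof -
  have g1: "Gamma (\<beta> + 1) = \<beta> * Gamma \<beta>"
    using b by (intro Gamma_plus1) (auto elim!: nonpos_Ints_cases)
  have "Gamma (real N + 1) > 0" by simp
  moreover have "Gamma \<beta> > 0" using b by simp
  moreover have "Gamma (real N + \<beta> + 1) > 0" using b by (intro Gamma_real_pos) simp
  moreover have "\<beta> + (real N + 1) = real N + \<beta> + 1" by simp
  ultimately show ?thesis using b
    unfolding gen_binom_def Beta_def g1 by (simp add: field_simps)
qed

lemma convex_lower:
  fixes \<Omega> :: "'a::euclidean_space set"
  assumes cv: "convex \<Omega>" and op: "open \<Omega>" and bd: "bounded \<Omega>"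
    and B: "ball x0 \<rho> \<subseteq> \<Omega>" and \<rho>: "\<rho> > 0" and b: "\<beta> > 0"
  shows "ennreal (\<rho> powr \<beta> * (\<beta> * Beta \<beta> (real DIM('a) + 1))) * emeasure lborel \<Omega>
     \<le> (\<integral>\<^sup>+x. indicator \<Omega> x * ennreal (dist_bd \<Omega> x powr \<beta>) \<partial>lborel)"
proof -
  have [measurable]: "\<Omega> \<in> sets borel" using op by simp
  have "ennreal (\<rho> powr \<beta> * (\<beta> * Beta \<beta> (real DIM('a) + 1))) * emeasure lborel \<Omega>
     = (\<integral>\<^sup>+t. indicator {0..\<rho>} t * ennreal (\<beta> * t powr (\<beta>-1) * (1 - t/\<rho>) ^ DIM('a)) \<partial>lborel) * emeasure lborel \<Omega>"
    by (simp add: beta_scaled[OF b \<rho>])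
  also have "\<dots> = (\<integral>\<^sup>+t. indicator {0..\<rho>} t * ennreal (\<beta> * t powr (\<beta>-1) * (1 - t/\<rho>) ^ DIM('a)) * emeasure lborel \<Omega> \<partial>lborel)"
    by (rule nn_integral_multc[symmetric]) measurable
  also have "\<dots> \<le> (\<integral>\<^sup>+t. indicator {0..} t * ennreal (\<beta> * t powr (\<beta>-1)) * emeasure lborel {x\<in>\<Omega>. t \<le> dist_bd \<Omega> x} \<partial>lborel)"
  proof (intro nn_integral_mono)
    fix t :: real
    show "indicator {0..\<rho>} t * ennreal (\<beta> * t powr (\<beta>-1) * (1 - t/\<rho>) ^ DIM('a)) * emeasure lborel \<Omega>
      \<le> indicator {0..} t * ennreal (\<beta> * t powr (\<beta>-1)) * emeasure lborel {x\<in>\<Omega>. t \<le> dist_bd \<Omega> x}"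
    proof (cases "t \<in> {0..\<rho>}")
      case True
      then have t: "0 \<le> t" "t \<le> \<rho>" by auto
      have nn: "0 \<le> \<beta> * t powr (\<beta>-1)" "0 \<le> (1 - t/\<rho>) ^ DIM('a)"
        using t \<rho> b by auto
      have "ennreal (\<beta> * t powr (\<beta>-1) * (1 - t/\<rho>) ^ DIM('a)) * emeasure lborel \<Omega>
        = ennreal (\<beta> * t powr (\<beta>-1)) * (ennreal ((1 - t/\<rho>) ^ DIM('a)) * emeasure lborel \<Omega>)"
        by (subst ennreal_mult[OF nn]) (rule mult.assoc)
      also have "\<dots> \<le> ennreal (\<beta> * t powr (\<beta>-1)) * emeasure lborel {x\<in>\<Omega>. t \<le> dist_bd \<Omega> x}"
        by (intro mult_left_mono level_measure[OF cv op bd B \<rho> t]) simp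
      finally show ?thesis using True t by simp
    next
      case False
      then show ?thesis by simp
    qed
  qed
  also have "\<dots> = (\<integral>\<^sup>+x. indicator \<Omega> x * ennreal (dist_bd \<Omega> x powr \<beta>) \<partial>lborel)"
    by (rule layer_cake[symmetric]) (use b in \<open>auto simp: dist_bd_nonneg\<close>)
  finally show ?thesis .
qed

lemma ball_dist_bd:
  fixes x :: "'a::euclidean_space"
  assumes "norm x < 1"
  shows "dist_bd (ball 0 1) x = 1 - norm x"
proof -
  have fr: "frontier (ball (0::'a) 1) = sphere 0 1" by simp
  have "ball x (1 - norm x) \<subseteq> ball 0 1"
  proof
    fix y assume "y \<in> ball x (1 - norm x)"
    then have "dist x y < 1 - norm x" by simp
    moreover have "norm y \<le> norm x + dist x y"
      using norm_triangle_sub[of y x] by (simp add: dist_norm norm_minus_commute)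
    ultimately show "y \<in> ball 0 1" by simp
  qed
  from ball_le_infdist[OF open_ball this] have ge: "1 - norm x \<le> dist_bd (ball 0 1) x"
    unfolding dist_bd_def by simp
  obtain a :: 'a where a: "norm a = 1" "dist x a \<le> 1 - norm x"
  proof (cases "x = 0")
    case True
    then show ?thesis using that[of "SOME i. i \<in> Basis"] by (simp add: SOME_Basis)
  next
    case False
    define a where "a = x /\<^sub>R norm x"
    have na: "norm a = 1" using False by (simp add: a_def)
    have "x = norm x *\<^sub>R a" using False by (simp add: a_def)
    then have "x - a = (norm x - 1) *\<^sub>R a" by (metis scaleR_left.diff scaleR_one)
    then have "dist x a = \<bar>norm x - 1\<bar>" by (simp add: dist_norm na)
    then show ?thesis using that[of a] na assms by simp
  qed
  have "dist_bd (ball 0 1) x \<le> 1 - norm x"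
    unfolding dist_bd_def fr by (rule infdist_le2[of a]) (use a in auto)
  with ge show ?thesis by simp
qed



lemma part1:
  fixes \<Omega> :: "'a::euclidean_space set"
  assumes bd: "bounded \<Omega>" and cv: "convex \<Omega>" and op: "open \<Omega>" and ne: "\<Omega> \<noteq> {}" and b: "\<beta> > 0"
  shows "\<beta> * Beta \<beta> (real DIM('a) + 1) \<le> torsion_ratio \<beta> \<Omega>"
proof -
  define c where "c = \<beta> * Beta \<beta> (real DIM('a) + 1)"
  have c: "c > 0" using b by (simp add: c_def Beta_def)
  have [measurable]: "\<Omega> \<in> sets borel" using op by simp
  define d where "d = dist_bd \<Omega>"
  define IN where "IN = (\<integral>\<^sup>+x. indicator \<Omega> x * ennreal (d x powr \<beta>) \<partial>lborel)"
  define I where "I = integral \<Omega> (\<lambda>x. d x powr \<beta>)"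
  define m where "m = measure lebesgue \<Omega>"
  obtain C where C: "C \<ge> 0" "\<And>x. x \<in> \<Omega> \<Longrightarrow> d x \<le> C"
    using infdist_bounded[OF bd ne] unfolding d_def dist_bd_def by blast
  have finM: "emeasure lborel \<Omega> < \<infinity>" by (rule emeasure_bounded_finite[OF bd])
  have Mm: "emeasure lborel \<Omega> = ennreal m"
    using finM by (simp add: m_def emeasure_eq_ennreal_measure)
  have "IN \<le> (\<integral>\<^sup>+x. ennreal (C powr \<beta>) * indicator \<Omega> x \<partial>lborel)"
    unfolding IN_def
  proof (intro nn_integral_mono)
    fix x show "indicator \<Omega> x * ennreal (d x powr \<beta>) \<le> ennreal (C powr \<beta>) * indicator \<Omega> x"
    proof (cases "x \<in> \<Omega>")
      case True
      have "d x powr \<beta> \<le> C powr \<beta>"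
        using C(2)[OF True] b by (intro powr_mono2) (auto simp: d_def dist_bd_nonneg)
      then show ?thesis using True by simp
    qed simp
  qed
  also have "\<dots> = ennreal (C powr \<beta>) * emeasure lborel \<Omega>"
    by (rule nn_integral_cmult_indicator) simp
  also have "\<dots> < \<infinity>" using finM by (simp add: ennreal_mult_less_top)
  finally have fin: "IN < \<infinity>" .
  have IN: "IN = ennreal I"
    unfolding IN_def I_def d_def
    by (rule nn_to_integral) (use fin b in \<open>auto simp: IN_def d_def dist_bd_nonneg\<close>)
  obtain x1 e where e: "e > 0" "ball x1 e \<subseteq> \<Omega>"
    using ne op by (meson all_not_in_conv openE)
  have m: "m > 0"
  proof -
    have "measure lborel (ball x1 e) \<le> measure lborel \<Omega>"
      using e finM by (intro measure_mono_fmeasurable) (auto intro: fmeasurableI)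
    moreover have "measure lborel (ball x1 e) > 0" using content_ball_pos[OF e(1)] by simp
    moreover have "m = measure lborel \<Omega>" by (simp add: m_def)
    ultimately show ?thesis by linarith
  qed
  have key: "\<rho> powr \<beta> * c * m \<le> I" if "ball x \<rho> \<subseteq> \<Omega>" "\<rho> > 0" for x \<rho>
  proof -
    have "ennreal (\<rho> powr \<beta> * c) * ennreal m \<le> ennreal I"
      using convex_lower[OF cv op bd that b] by (simp add: c_def Mm IN[symmetric] IN_def d_def)
    then have le: "ennreal (\<rho> powr \<beta> * c * m) \<le> ennreal I"
      using c m by (simp add: ennreal_mult[symmetric])
    have pos: "\<rho> powr \<beta> * c * m > 0" using c m that by simp
    have "I > 0"
    proof (rule ccontr)
      assume "\<not> I > 0"
      then have "ennreal I = 0" by (simp add: ennreal_eq_0_iff)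
      with le pos c m that(2) show False by simp
    qed
    with le show ?thesis by simp
  qed
  have Ipos: "I > 0" using key[OF e(2) e(1)] c m e by (smt (verit) mult_pos_pos powr_gt_zero)
  define K where "K = (I / (c * m)) powr (1 / \<beta>)"
  have K: "K \<ge> 0" by (simp add: K_def)
  have rhoK: "\<rho> \<le> K" if "ball x \<rho> \<subseteq> \<Omega>" for x \<rho>
  proof (cases "\<rho> > 0")
    case True
    have "\<rho> powr \<beta> \<le> I / (c * m)"
      using key[OF that True] c m by (simp add: field_simps)
    then have "(\<rho> powr \<beta>) powr (1/\<beta>) \<le> K"
      unfolding K_def using b by (intro powr_mono2) auto
    then show ?thesis using True b by (simp add: powr_powr)
  next
    case False then show ?thesis using K by simp
  qed
  define S where "S = {\<rho>. \<exists>x. ball x \<rho> \<subseteq> \<Omega>}"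
  have Sne: "e \<in> S" using e by (auto simp: S_def)
  have Sbd: "\<And>\<rho>. \<rho> \<in> S \<Longrightarrow> \<rho> \<le> K" using rhoK by (auto simp: S_def)
  have r_def: "inradius \<Omega> = Sup S" by (simp add: inradius_def S_def)
  have rpos: "inradius \<Omega> > 0"
  proof -
    have "e \<le> Sup S" by (rule cSup_upper[OF Sne]) (rule bdd_aboveI[of _ K], rule Sbd)
    then show ?thesis using e r_def by simp
  qed
  have rK: "inradius \<Omega> \<le> K"
    unfolding r_def by (rule cSup_least) (use Sne Sbd in auto)
  have "inradius \<Omega> powr \<beta> \<le> K powr \<beta>"
    using rpos rK b by (intro powr_mono2) auto
  also have "K powr \<beta> = I / (c * m)"
    unfolding K_def using b Ipos c m by (simp add: powr_powr)
  finally have "inradius \<Omega> powr \<beta> * (c * m) \<le> I"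
    using c m by (simp add: field_simps)
  then have "c \<le> I / (m * inradius \<Omega> powr \<beta>)"
    using c m rpos by (simp add: field_simps)
  also have "\<dots> = torsion_ratio \<beta> \<Omega>"
    unfolding torsion_ratio_def I_def m_def d_def using rpos by (simp add: powr_minus_divide)
  finally show ?thesis unfolding c_def .
qed



lemma part2:
  assumes b: "\<beta> > 0"
  shows "torsion_ratio \<beta> (ball (0::'a::euclidean_space) 1) = \<beta> * Beta \<beta> (real DIM('a) + 1)"
proof -
  define c where "c = \<beta> * Beta \<beta> (real DIM('a) + 1)"
  have c: "c > 0" using b by (simp add: c_def Beta_def)
  define B where "B = ball (0::'a) 1"
  define w where "w = unit_ball_vol (real DIM('a))"
  have [measurable]: "B \<in> sets borel" by (simp add: B_def)
  have mB: "measure lebesgue B = w"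
    using content_ball[where c="0::'a" and r=1] by (simp add: B_def w_def)
  have p1: "0 < measure lborel B" unfolding B_def by (rule content_ball_pos) simp
  have p2: "measure lebesgue B = measure lborel B" by simp
  have wpos: "w > 0" using p1 p2 mB by linarith
  have dB: "\<And>x. x \<in> B \<Longrightarrow> dist_bd B x = 1 - norm x"
    unfolding B_def by (rule ball_dist_bd) simp
  have pt: "indicator {0..} t * ennreal (\<beta> * t powr (\<beta>-1)) * emeasure lborel {x\<in>B. t \<le> dist_bd B x}
     = indicator {0..1} t * ennreal (\<beta> * t powr (\<beta>-1) * (1 - t/1) ^ DIM('a)) * ennreal w" for t :: real
  proof -
    consider "t < 0" | "t = 0" | "0 < t \<and> t \<le> 1" | "t > 1" by linarith
    then show ?thesis
    proof cases
      case 1 then show ?thesis by simp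
    next
      case 2
      have "{x\<in>B. t \<le> dist_bd B x} = B" using 2 by (auto simp: dist_bd_nonneg)
      then show ?thesis using 2 emeasure_ball[where c="0::'a" and r=1]
        by (simp add: B_def w_def)
    next
      case 3
      have "{x\<in>B. t \<le> dist_bd B x} = cball 0 (1 - t)"
        using 3 dB by (auto simp: B_def)
      moreover have "emeasure lborel (cball (0::'a) (1 - t)) = ennreal (w * (1 - t) ^ DIM('a))"
        unfolding w_def by (rule emeasure_cball) (use 3 in auto)
      moreover have "0 \<le> \<beta> * t powr (\<beta>-1)" "0 \<le> (1 - t) ^ DIM('a)"
        "0 \<le> \<beta> * (t powr (\<beta>-1) * (1-t)^DIM('a))" using 3 b by auto
      ultimately show ?thesis using 3 wpos
        by (simp add: ennreal_mult[symmetric] mult_ac)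
    next
      case 4
      have "{x\<in>B. t \<le> dist_bd B x} = {}"
        using 4 dB by (auto simp: B_def) (smt (verit) norm_ge_zero)
      then show ?thesis using 4 by (simp del: Collect_empty_eq)
    qed
  qed
  have "(\<integral>\<^sup>+x. indicator B x * ennreal (dist_bd B x powr \<beta>) \<partial>lborel)
     = (\<integral>\<^sup>+t. indicator {0..} t * ennreal (\<beta> * t powr (\<beta>-1)) * emeasure lborel {x\<in>B. t \<le> dist_bd B x} \<partial>lborel)"
    by (rule layer_cake) (use b in \<open>auto simp: dist_bd_nonneg\<close>)
  also have "\<dots> = (\<integral>\<^sup>+t. indicator {0..1} t * ennreal (\<beta> * t powr (\<beta>-1) * (1 - t/1) ^ DIM('a)) * ennreal w \<partial>lborel)"
    by (simp only: pt)
  also have "\<dots> = (\<integral>\<^sup>+t. indicator {0..1} t * ennreal (\<beta> * t powr (\<beta>-1) * (1 - t/1) ^ DIM('a)) \<partial>lborel) * ennreal w"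
    by (rule nn_integral_multc) measurable
  also have "\<dots> = ennreal (c * w)"
    using beta_scaled[OF b zero_less_one, of "DIM('a)"] c wpos
    by (simp add: c_def ennreal_mult[symmetric])
  finally have IN: "(\<integral>\<^sup>+x. indicator B x * ennreal (dist_bd B x powr \<beta>) \<partial>lborel) = ennreal (c * w)" .
  have "(\<integral>\<^sup>+x. indicator B x * ennreal (dist_bd B x powr \<beta>) \<partial>lborel) = ennreal (integral B (\<lambda>x. dist_bd B x powr \<beta>))"
    by (rule nn_to_integral) (use b IN in \<open>auto simp: dist_bd_nonneg\<close>)
  with IN have "ennreal (integral B (\<lambda>x. dist_bd B x powr \<beta>)) = ennreal (c * w)" by simp
  then have I: "integral B (\<lambda>x. dist_bd B x powr \<beta>) = c * w"
    using c wpos by (metis ennreal_eq_0_iff ennreal_inj linorder_not_le mult_pos_pos order_less_imp_le)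
  have r: "inradius B = 1"
    unfolding inradius_def
  proof (rule cSup_eq_maximum)
    show "1 \<in> {r. \<exists>x. ball x r \<subseteq> B}" by (auto simp: B_def)
    fix r assume "r \<in> {r. \<exists>x. ball x r \<subseteq> B}"
    then obtain x where x: "ball x r \<subseteq> B" by auto
    show "r \<le> 1"
    proof (cases "r > 0")
      case True
      then have "x \<in> B" using x by auto
      have "r \<le> infdist x (frontier B)"
        by (rule ball_le_infdist[OF _ x]) (auto simp: B_def)
      then show ?thesis using dB[OF \<open>x \<in> B\<close>] unfolding dist_bd_def by (smt (verit) norm_ge_zero)
    qed simp
  qed
  show ?thesis
    unfolding torsion_ratio_def B_def[symmetric] r I mB using wpos
    by (simp add: c_def)
qed


theorem proposition2p6:
  fixes \<beta> :: real
  assumes "DIM('n::euclidean_space) \<ge> 2" and "\<beta> > 0"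
  shows "(\<forall>\<Omega>::'n set. bounded \<Omega> \<and> convex \<Omega> \<and> open \<Omega> \<and> \<Omega> \<noteq> {} \<longrightarrow>
            inverse (gen_binom (real DIM('n)) \<beta>) \<le> torsion_ratio \<beta> \<Omega>)
         \<and> torsion_ratio \<beta> (ball (0::'n) 1) = inverse (gen_binom (real DIM('n)) \<beta>)"
  using part1[OF _ _ _ _ assms(2)] part2[OF assms(2)] gen_binom_inv[OF assms(2)] by auto

end
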